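(* Let $|p|<1$ and let $a,b,q,r$ be nonzero complex numbers such that all expressions below are well defined. Then for every $n=0,1,2,\ldots$, $$\theta(a/r,\,b/r;p)\sum_{k=0}^n\frac{(aq^k,\,bq^{-k};r,p)_{n-1}\,\theta(aq^{2k}/b;p)}{(q;q,p)_k\,(q;q,p)_{n-k}\,(aq^k/b;q,p)_{n+1}}(-1)^kq^{\binom k2}=\delta_{n,0}.$$
   Context: For $|p|<1$ and $x\neq 0$, $\theta(x;p)=(x;p)_\infty(p/x;p)_\infty$ where $(x;p)_\infty=\prod_{k\ge 0}(1-xp^k)$, and $\theta(x_1,\dots,x_m;p)=\prod_{i=1}^m\theta(x_i;p)$. For $a\ne0$ and an integer $n$: $(a;q,p)_n=\prod_{k=0}^{n-1}\theta(aq^k;p)$ for $n\ge1$, $(a;q,p)_0=1$, $(a;q,p)_n=1/\prod_{k=0}^{-n-1}\theta(aq^{n+k};p)$ for $n\le-1$ (so $(a;r,p)_{-1}=1/\theta(a/r;p)$); $(a_1,\dots,a_m;q,p)_n=\prod_i(a_i;q,p)_n$. $\delta_{n,0}$ is the Kronecker delta. *)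

theory Defs
  imports "HOL-Analysis.Analysis"
begin

definition qinf :: "complex \<Rightarrow> complex \<Rightarrow> complex" where
  "qinf x p = (\<Prod>k. (1 - x * p ^ k))"

definition etheta :: "complex \<Rightarrow> complex \<Rightarrow> complex" where
  "etheta x p = qinf x p * qinf (p / x) p"

definition epoch :: "complex \<Rightarrow> complex \<Rightarrow> complex \<Rightarrow> int \<Rightarrow> complex" where
  "epoch a q p n =
     (if n \<ge> 0 then (\<Prod>k<nat n. etheta (a * q ^ k) p)
      else 1 / (\<Prod>k<nat (- n). etheta (a * q powi (n + int k)) p))"

end

theory Submission
  imports Defs "HOL-Complex_Analysis.Complex_Analysis"
begin


lemma qinf_abs_conv:
  assumes "norm p < (1::real)"
  shows "abs_convergent_prod (\<lambda>k. 1 - x * (p::complex) ^ k)"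
proof (rule summable_imp_abs_convergent_prod)
  have "summable (\<lambda>k. norm x * norm p ^ k)"
    using assms by (intro summable_mult summable_geometric) auto
  then show "summable (\<lambda>k. norm (1 - x * p ^ k - 1))"
    by (simp add: norm_mult norm_power)
qed

lemma qinf_conv:
  assumes "norm p < (1::real)"
  shows "convergent_prod (\<lambda>k. 1 - x * (p::complex) ^ k)"
  by (rule abs_convergent_prod_imp_convergent_prod[OF qinf_abs_conv[OF assms]])

lemma qinf_has_prod:
  assumes "norm p < (1::real)"
  shows "(\<lambda>k. 1 - x * (p::complex) ^ k) has_prod qinf x p"
  using qinf_conv[OF assms] unfolding qinf_def convergent_prod_has_prod_iff .

lemma qinf_shift:
  assumes "norm p < (1::real)"
  shows "qinf x p = (1 - x) * qinf (p * x) p"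
proof -
  have "(\<lambda>k. 1 - x * p ^ k) has_prod ((\<Prod>k<1. 1 - x * p ^ k) * (\<Prod>k. 1 - x * p ^ (k + 1)))"
    by (rule has_prod_ignore_initial_segment'[OF qinf_conv[OF assms]])
  moreover have "(\<Prod>k. 1 - x * p ^ (k + 1)) = qinf (p * x) p"
    unfolding qinf_def by (rule prodinf_cong) (simp add: algebra_simps)
  ultimately have "(\<lambda>k. 1 - x * p ^ k) has_prod ((1 - x) * qinf (p * x) p)" by simp
  then show ?thesis using has_prod_unique qinf_def by metis
qed

lemma qinf_eq_0_iff:
  assumes "norm p < (1::real)"
  shows "qinf x p = 0 \<longleftrightarrow> (\<exists>k. x * p ^ k = 1)"
proof -
  have "qinf x p = 0 \<longleftrightarrow> 0 \<in> range (\<lambda>k. 1 - x * p ^ k)"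
    by (rule has_prod_eq_0_iff[OF qinf_has_prod[OF assms, of x]])
  also have "\<dots> \<longleftrightarrow> (\<exists>k. x * p ^ k = 1)"
    by (metis (no_types, lifting) eq_iff_diff_eq_0 image_iff rangeI)
  finally show ?thesis .
qed

lemma qinf_0: "qinf 0 p = 1"
  unfolding qinf_def by simp



lemma qinf_uniform_limit:
  assumes p: "norm p < (1::real)" and R: "R > 0"
  shows "uniform_limit (cball 0 R) (\<lambda>N x. \<Prod>n<N. 1 - x * (p::complex) ^ n) (\<lambda>x. qinf x p) sequentially"
proof -
  have "uniformly_convergent_on (cball 0 R) (\<lambda>N x. \<Prod>n<N. 1 - x * (p::complex) ^ n)"
  proof (rule uniformly_convergent_on_prod')
    show "uniformly_convergent_on (cball 0 R) (\<lambda>N x. \<Sum>n<N. norm (1 - x * p ^ n - 1))"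
    proof (rule Weierstrass_m_test')
      fix n and x :: complex assume "x \<in> cball 0 R"
      then have "norm x \<le> R" by auto
      then show "norm (norm (1 - x * p ^ n - 1)) \<le> R * norm p ^ n"
        by (simp add: norm_mult norm_power mult_right_mono)
    next
      show "summable (\<lambda>n. R * norm p ^ n)"
        using p by (intro summable_mult summable_geometric) auto
    qed
  qed (auto intro!: continuous_intros)
  then obtain g where g: "uniform_limit (cball 0 R) (\<lambda>N x. \<Prod>n<N. 1 - x * (p::complex) ^ n) g sequentially"
    by (auto simp: uniformly_convergent_on_def)
  also have "?this \<longleftrightarrow> uniform_limit (cball 0 R) (\<lambda>N x. \<Prod>n<N. 1 - x * (p::complex) ^ n) (\<lambda>x. qinf x p) sequentially"
  proof (intro uniform_limit_cong)
    fix z :: complex assume "z \<in> cball 0 R"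
    from tendsto_uniform_limitI[OF g this] have "(\<lambda>n. \<Prod>k<n. 1 - z * p ^ k) \<longlonglongrightarrow> g z" .
    then have "(\<lambda>n. \<Prod>k<Suc n. 1 - z * p ^ k) \<longlonglongrightarrow> g z"
      by (rule LIMSEQ_Suc)
    moreover have "(\<lambda>n. \<Prod>k<Suc n. 1 - z * p ^ k) \<longlonglongrightarrow> qinf z p"
      using convergent_prod_LIMSEQ[OF qinf_conv[OF p, of z]] unfolding lessThan_Suc_atMost
      by (simp add: qinf_def)
    ultimately show "g z = qinf z p"
      using tendsto_unique by force
  qed auto
  finally show ?thesis .
qed

lemma qinf_holomorphic:
  assumes p: "norm p < (1::real)"
  shows "(\<lambda>x. qinf x p) holomorphic_on A"
proof (rule holomorphic_on_subset)
  show "(\<lambda>x. qinf x p) holomorphic_on UNIV"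
  proof (rule holomorphic_uniform_sequence[where f = "\<lambda>N x. \<Prod>n<N. 1 - x * (p::complex) ^ n"])
    fix z :: complex
    have *: "uniform_limit (cball 0 (norm z + 1)) (\<lambda>N x. \<Prod>n<N. 1 - x * (p::complex) ^ n) (\<lambda>x. qinf x p) sequentially"
      by (rule qinf_uniform_limit[OF p]) (auto intro: add_nonneg_pos)
    hence "uniform_limit (cball z 1) (\<lambda>N x. \<Prod>n<N. 1 - x * (p::complex) ^ n) (\<lambda>x. qinf x p) sequentially"
      by (rule uniform_limit_on_subset) (simp add: cball_subset_cball_iff)
    thus "\<exists>d>0. cball z d \<subseteq> UNIV \<and> uniform_limit (cball z d) (\<lambda>N x. \<Prod>n<N. 1 - x * (p::complex) ^ n) (\<lambda>x. qinf x p) sequentially"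
      by (intro exI[of _ 1]) auto
  qed (auto intro!: holomorphic_intros)
qed auto

lemma qinf_holomorphic' [holomorphic_intros]:
  assumes p: "norm p < (1::real)" and f: "f holomorphic_on A"
  shows "(\<lambda>x. qinf (f x) p) holomorphic_on A"
  using holomorphic_on_compose[OF f qinf_holomorphic[OF p, of "f ` A"]] by (simp add: o_def)

lemma qinf_continuous_on [continuous_intros]:
  assumes p: "norm p < (1::real)" and f: "continuous_on A f"
  shows "continuous_on A (\<lambda>x. qinf (f x) p)"
  using continuous_on_compose[OF f holomorphic_on_imp_continuous_on[OF qinf_holomorphic[OF p, of "f ` A"]]]
  by (simp add: o_def)



lemma etheta_inv:
  assumes p: "norm p < (1::real)" and x: "x \<noteq> 0"
  shows "etheta (1 / x) p = - etheta x p / x"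
proof -
  have a: "qinf (1/x) p = (1 - 1/x) * qinf (p / x) p"
    using qinf_shift[OF p, of "1/x"] by simp
  have b: "qinf x p = (1 - x) * qinf (p * x) p"
    using qinf_shift[OF p, of x] by simp
  have "etheta (1 / x) p = qinf (1/x) p * qinf (p * x) p"
    unfolding etheta_def by simp
  also have "\<dots> = - etheta x p / x"
    unfolding etheta_def a b using x by (simp add: field_simps)
  finally show ?thesis .
qed

lemma etheta_shift:
  assumes p: "norm p < (1::real)" "p \<noteq> 0" and x: "x \<noteq> 0"
  shows "etheta (p * x) p = - etheta x p / x"
proof -
  have a: "qinf (1/x) p = (1 - 1/x) * qinf (p / x) p"
    using qinf_shift[OF p(1), of "1/x"] by simp
  have b: "qinf x p = (1 - x) * qinf (p * x) p"
    using qinf_shift[OF p(1), of x] by simp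
  have "etheta (p * x) p = qinf (p * x) p * qinf (1/x) p"
    unfolding etheta_def using p(2) by simp
  also have "\<dots> = - etheta x p / x"
    unfolding etheta_def a b using x by (simp add: field_simps)
  finally show ?thesis .
qed

lemma etheta_1:
  assumes p: "norm p < (1::real)"
  shows "etheta 1 p = 0"
  unfolding etheta_def using qinf_shift[OF p, of 1] by simp

lemma etheta_eq_0D:
  assumes p: "norm p < (1::real)" "p \<noteq> 0" and x: "x \<noteq> 0" and e: "etheta x p = 0"
  shows "(\<exists>n. x = p ^ Suc n) \<or> (\<exists>n. x * p ^ n = 1)"
proof -
  from e have "qinf x p = 0 \<or> qinf (p / x) p = 0" unfolding etheta_def by simp
  then show ?thesis
  proof
    assume "qinf x p = 0" then show ?thesis using qinf_eq_0_iff[OF p(1)] by blast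
  next
    assume "qinf (p / x) p = 0"
    then obtain k where "p / x * p ^ k = 1" using qinf_eq_0_iff[OF p(1)] by blast
    then have "x = p ^ Suc k" using x by (simp add: field_simps)
    then show ?thesis by blast
  qed
qed

lemma etheta_holomorphic [holomorphic_intros]:
  assumes p: "norm p < (1::real)" and f: "f holomorphic_on A" and nz: "\<And>x. x \<in> A \<Longrightarrow> f x \<noteq> 0"
  shows "(\<lambda>x. etheta (f x) p) holomorphic_on A"
  unfolding etheta_def using p f nz by (intro holomorphic_intros) auto

lemma etheta_continuous_on [continuous_intros]:
  assumes p: "norm p < (1::real)" and f: "continuous_on A f" and nz: "\<And>x. x \<in> A \<Longrightarrow> f x \<noteq> 0"
  shows "continuous_on A (\<lambda>x. etheta (f x) p)"
  unfolding etheta_def using p f nz by (intro continuous_intros) auto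

definition phi :: "complex \<Rightarrow> complex \<Rightarrow> complex \<Rightarrow> complex" where
  "phi p x y = etheta (x * y) p * etheta (x / y) p / x"

lemma phi_antisym:
  assumes p: "norm p < (1::real)" and x: "x \<noteq> 0" and y: "y \<noteq> 0"
  shows "phi p y x = - phi p x y"
proof -
  have "etheta (y / x) p = - etheta (x / y) p / (x / y)"
    using etheta_inv[OF p, of "x / y"] x y by simp
  moreover have "y * x = x * y" by simp
  ultimately have "phi p y x = etheta (x * y) p * (- etheta (x / y) p / (x / y)) / y"
    unfolding phi_def by metis
  then show ?thesis unfolding phi_def using x y by (simp add: field_simps)
qed

lemma phi_self:
  assumes p: "norm p < (1::real)" and x: "x \<noteq> 0"
  shows "phi p x x = 0"
  unfolding phi_def using x etheta_1[OF p] by simp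

lemma phi_inv1:
  assumes p: "norm p < (1::real)" and x: "x \<noteq> 0" and y: "y \<noteq> 0"
  shows "phi p (1 / x) y = phi p x y"
proof -
  have a: "etheta (1 / x * y) p = - etheta (x / y) p / (x / y)"
    using etheta_inv[OF p, of "x / y"] x y by simp
  have b: "etheta (1 / x / y) p = - etheta (x * y) p / (x * y)"
    using etheta_inv[OF p, of "x * y"] x y by simp
  show ?thesis unfolding phi_def a b using x y by (simp add: field_simps)
qed

lemma phi_shift:
  assumes p: "norm p < (1::real)" "p \<noteq> 0" and x: "x \<noteq> 0" and y: "y \<noteq> 0"
  shows "phi p (p * x) y = phi p x y / (p * x ^ 2)"
proof -
  have a: "etheta (p * x * y) p = - etheta (x * y) p / (x * y)"
    using etheta_shift[OF p, of "x * y"] x y by (simp add: mult.assoc)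
  have b: "etheta (p * x / y) p = - etheta (x / y) p / (x / y)"
    using etheta_shift[OF p, of "x / y"] x y by (simp add: mult.assoc)
  show ?thesis unfolding phi_def a b using x y p by (simp add: field_simps power2_eq_square)
qed



lemma pow_bracket:
  fixes c t :: real
  assumes c: "0 < c" "c < 1" and t: "0 < t" "t \<le> 1"
  shows "\<exists>n. c ^ Suc n < t \<and> t \<le> c ^ n"
proof -
  obtain N where N: "c ^ N < t" using real_arch_pow_inv[OF t(1) c(2)] by blast
  define M where "M = (LEAST N. c ^ N < t)"
  have M: "c ^ M < t" unfolding M_def by (rule LeastI[of _ N]) (rule N)
  have "M \<noteq> 0" proof assume "M = 0" then show False using M t by simp qed
  then obtain n where n: "M = Suc n" by (cases M) auto
  have "\<not> c ^ n < t" using not_less_Least[of n "\<lambda>N. c ^ N < t"] n unfolding M_def by auto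
  then show ?thesis using M n by (intro exI[of _ n]) auto
qed

lemma elliptic_const:
  assumes p: "norm p < (1::real)" "p \<noteq> 0"
    and holo: "f holomorphic_on - {0}"
    and per: "\<And>x. x \<noteq> 0 \<Longrightarrow> f (p * x) = f x"
    and x: "x \<noteq> 0" and y: "y \<noteq> 0"
  shows "f x = (f y :: complex)"
proof -
  define K where "K = {z::complex. norm p \<le> norm z \<and> norm z \<le> 1}"
  have "closed K" unfolding K_def
    by (intro closed_Collect_conj closed_Collect_le continuous_intros)
  moreover have "bounded K" unfolding K_def by (rule bounded_subset[of "cball 0 1"]) auto
  ultimately have "compact K" by (simp add: compact_eq_bounded_closed)
  moreover have "K \<subseteq> - {0}" unfolding K_def using p by auto
  ultimately have "compact (f ` K)"
    using holomorphic_on_imp_continuous_on[OF holo] by (intro compact_continuous_image) (auto intro: continuous_on_subset)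
  then obtain B where B: "\<And>z. z \<in> K \<Longrightarrow> norm (f z) \<le> B"
    using compact_imp_bounded bounded_iff by (metis imageI)
  have pern: "f (p ^ n * z) = f z" if "z \<noteq> 0" for n z
  proof (induction n)
    case (Suc n)
    have "f (p ^ Suc n * z) = f (p * (p ^ n * z))" by (simp add: mult.assoc)
    also have "\<dots> = f (p ^ n * z)" using per that p by simp
    finally show ?case using Suc by simp
  qed simp
  have pern': "f (z / p ^ n) = f z" if "z \<noteq> 0" for n z
    using pern[of "z / p ^ n" n] that p by simp
  have bound: "norm (f z) \<le> B" if z: "z \<noteq> 0" for z
  proof (cases "norm z \<le> 1")
    case True
    obtain n where n: "norm p ^ Suc n < norm z" "norm z \<le> norm p ^ n"
      using pow_bracket[of "norm p" "norm z"] True z p by auto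
    have "z / p ^ n \<in> K"
      unfolding K_def using n p by (auto simp: norm_divide norm_power field_simps)
    then show ?thesis using B pern'[OF z, of n] by metis
  next
    case False
    then have "0 < inverse (norm z)" "inverse (norm z) \<le> 1" by (auto intro: inverse_le_1_iff[THEN iffD2])
    then obtain n where n: "norm p ^ Suc n < inverse (norm z)" "inverse (norm z) \<le> norm p ^ n"
      using pow_bracket[of "norm p" "inverse (norm z)"] p by auto
    have "p ^ Suc n * z \<in> K"
      unfolding K_def using n p z False
      by (auto simp: norm_mult norm_power field_simps)
    then show ?thesis using B pern[OF z, of "Suc n"] by metis
  qed
  have "\<exists>g. g holomorphic_on UNIV \<and> (\<forall>z \<in> UNIV - {0}. g z = f z)"
  proof (subst holomorphic_on_extend_bounded)
    show "f holomorphic_on UNIV - {0}" using holo by (simp add: Compl_eq_Diff_UNIV)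
    show "(0::complex) \<in> interior UNIV" by simp
    show "\<exists>B. \<forall>\<^sub>F z in at 0. norm (f z) \<le> B"
      by (intro exI[of _ B]) (auto simp: eventually_at_filter bound)
  qed
  then obtain g where g: "g holomorphic_on UNIV" "\<And>z. z \<noteq> 0 \<Longrightarrow> g z = f z" by auto
  have "bounded (range g)"
  proof -
    have "norm (g z) \<le> max B (norm (g 0))" for z
      using bound[of z] by (cases "z = 0") (auto simp: g(2) intro: le_max_iff_disj[THEN iffD2])
    then show ?thesis by (auto simp: bounded_iff)
  qed
  then have "g constant_on UNIV" by (rule Liouville_theorem[OF g(1)])
  then have "g x = g y" by (auto simp: constant_on_def)
  then show ?thesis using g(2) x y by simp
qed



lemma phi_holomorphic [holomorphic_intros]:
  assumes p: "norm p < (1::real)" and c: "c \<noteq> 0"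
  shows "(\<lambda>x. phi p x c) holomorphic_on - {0}"
  unfolding phi_def using p c by (intro holomorphic_intros) auto

lemma qinf_p_nonzero:
  assumes p: "norm p < (1::real)"
  shows "qinf p p \<noteq> 0"
proof
  assume "qinf p p = 0"
  then obtain k where k: "p * p ^ k = 1" using qinf_eq_0_iff[OF p] by blast
  then have "norm p ^ Suc k = 1" by (metis norm_one norm_power power_Suc)
  moreover have "norm p ^ Suc k < 1" using p by (cases "p = 0") (simp, rule power_Suc_less_one, auto)
  ultimately show False by simp
qed

lemma addition_generic:
  assumes p: "norm p < (1::real)" "p \<noteq> 0" and nz: "y \<noteq> 0" "u \<noteq> 0" "v \<noteq> 0"
    and gen1: "etheta (u * u) p \<noteq> 0" and gen2: "phi p y u \<noteq> 0" and x: "x \<noteq> 0"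
  shows "phi p x y * phi p u v - phi p x v * phi p u y = phi p x u * phi p y v"
proof -
  define G where "G x = phi p x y * phi p u v - phi p x v * phi p u y - phi p x u * phi p y v" for x
  define Dn where "Dn x = phi p x u" for x
  define H where "H x = G x / Dn x" for x
  have opn: "open (- {0::complex})" by auto
  have conn: "connected (- {0::complex})" by (intro connected_punctured_universe) simp
  have Gh: "G holomorphic_on - {0}"
    unfolding G_def using p nz by (intro holomorphic_intros) auto
  have Dh: "Dn holomorphic_on - {0}"
    unfolding Dn_def using p nz by (intro holomorphic_intros) auto
  have Gshift: "G (p * x) = G x / (p * x ^ 2)" if "x \<noteq> 0" for x
    unfolding G_def using phi_shift[OF p that] nz that p by (simp add: field_simps)
  have Dshift: "Dn (p * x) = Dn x / (p * x ^ 2)" if "x \<noteq> 0" for x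
    unfolding Dn_def using phi_shift[OF p that] nz by simp
  have Hshift: "H (p * x) = H x" if "x \<noteq> 0" for x
    unfolding H_def Gshift[OF that] Dshift[OF that] using that p by simp
  have Ginv: "G (1 / x) = G x" if "x \<noteq> 0" for x
    unfolding G_def using phi_inv1[OF p(1) that] nz by simp
  have Dinv: "Dn (1 / x) = Dn x" if "x \<noteq> 0" for x
    unfolding Dn_def using phi_inv1[OF p(1) that] nz by simp
  have Hinv: "H (1 / x) = H x" if "x \<noteq> 0" for x
    unfolding H_def Ginv[OF that] Dinv[OF that] ..
  have Gu: "G u = 0"
    unfolding G_def using phi_self[OF p(1) nz(2)] by simp
  have Gy: "G y = 0"
    unfolding G_def using phi_self[OF p(1) nz(1)] phi_antisym[OF p(1) nz(2) nz(1)] by simp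
  have Dy: "Dn y \<noteq> 0" unfolding Dn_def by (rule gen2)
  have zeros: "(\<exists>n. z = u * p ^ Suc n) \<or> (\<exists>n. z = u / p ^ n) \<or>
               (\<exists>n. z = (1 / u) * p ^ Suc n) \<or> (\<exists>n. z = (1 / u) / p ^ n)"
    if z: "z \<noteq> 0" "Dn z = 0" for z
  proof -
    from z have "etheta (z * u) p = 0 \<or> etheta (z / u) p = 0"
      unfolding Dn_def phi_def by simp
    then show ?thesis
    proof
      assume "etheta (z * u) p = 0"
      from etheta_eq_0D[OF p _ this] z nz
      have "(\<exists>n. z * u = p ^ Suc n) \<or> (\<exists>n. z * u * p ^ n = 1)" by simp
      then show ?thesis
      proof
        assume "\<exists>n. z * u = p ^ Suc n"
        then obtain n where "z * u = p ^ Suc n" by blast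
        then have "z = (1 / u) * p ^ Suc n" using nz by (simp add: field_simps)
        then show ?thesis by blast
      next
        assume "\<exists>n. z * u * p ^ n = 1"
        then obtain n where "z * u * p ^ n = 1" by blast
        then have "z = (1 / u) / p ^ n" using nz p by (simp add: field_simps)
        then show ?thesis by blast
      qed
    next
      assume "etheta (z / u) p = 0"
      from etheta_eq_0D[OF p _ this] z nz
      have "(\<exists>n. z / u = p ^ Suc n) \<or> (\<exists>n. z / u * p ^ n = 1)" by simp
      then show ?thesis
      proof
        assume "\<exists>n. z / u = p ^ Suc n"
        then obtain n where "z / u = p ^ Suc n" by blast
        then have "z = u * p ^ Suc n" using nz by (simp add: field_simps)
        then show ?thesis by blast
      next
        assume "\<exists>n. z / u * p ^ n = 1"
        then obtain n where "z / u * p ^ n = 1" by blast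
        then have "z = u / p ^ n" using nz p by (simp add: field_simps)
        then show ?thesis by blast
      qed
    qed
  qed
  define E where "E x = etheta (x * u) p * qinf (p * (x / u)) p * qinf (p / (x / u)) p / x" for x
  have Dfac: "Dn x = (1 - x / u) * E x" if "x \<noteq> 0" for x
  proof -
    have "etheta (x / u) p = (1 - x / u) * qinf (p * (x / u)) p * qinf (p / (x / u)) p"
      unfolding etheta_def using qinf_shift[OF p(1), of "x / u"] by simp
    then show ?thesis unfolding Dn_def phi_def E_def by simp
  qed
  have Eh: "E holomorphic_on - {0}"
    unfolding E_def using p nz by (intro holomorphic_intros) auto
  have Ecu: "isCont E u"
    using holomorphic_on_imp_continuous_on[OF Eh] nz opn
    by (simp add: continuous_on_eq_continuous_at)
  have Eu: "E u \<noteq> 0"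
    unfolding E_def using gen1 qinf_p_nonzero[OF p(1)] nz by simp
  obtain G' where G': "(G has_field_derivative G') (at u)"
    using Gh opn nz by (auto simp: holomorphic_on_open)
  have dq: "((\<lambda>x. (G x - G u) / (x - u)) \<longlongrightarrow> G') (at u)"
    using G' by (simp add: has_field_derivative_iff)
  have Et: "(E \<longlongrightarrow> E u) (at u)" using Ecu by (simp add: isCont_def)
  have lim1: "((\<lambda>x. (G x - G u) / (x - u) * (- u / E x)) \<longlongrightarrow> G' * (- u / E u)) (at u)"
    by (intro tendsto_intros dq Et Eu)
  have ev: "eventually (\<lambda>x. x \<in> - {0} - {u}) (at u)"
    by (rule eventually_at_in_open) (use nz in auto)
  have limu: "(H \<longlongrightarrow> G' * (- u / E u)) (at u)"
  proof (rule Lim_transform_eventually[OF lim1])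
    show "\<forall>\<^sub>F x in at u. (G x - G u) / (x - u) * (- u / E x) = H x"
      using ev
    proof eventually_elim
      case (elim x)
      then have x0: "x \<noteq> 0" and xu: "x \<noteq> u" by auto
      have "1 - x / u = - (x - u) / u" using nz by (simp add: field_simps)
      then have "H x = G x / (- (x - u) / u * E x)" unfolding H_def Dfac[OF x0] by simp
      then show ?case using Gu xu nz by (cases "E x = 0") (auto simp: field_simps)
    qed
  qed
  have lim_inv: "(H \<longlongrightarrow> L) (at (1 / w))" if L: "(H \<longlongrightarrow> L) (at w)" and w: "w \<noteq> 0" for w L
  proof -
    have f: "filterlim (\<lambda>z. 1 / z) (at w) (at (1 / w))"
    proof (rule filterlim_atI)
      show "((\<lambda>z. 1 / z) \<longlongrightarrow> w) (at (1 / w))"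
        using w by (auto intro!: tendsto_eq_intros)
      have "\<forall>\<^sub>F x in at (1 / w). x \<noteq> 1 / w" by (simp add: eventually_at_filter)
      then show "\<forall>\<^sub>F x in at (1 / w). 1 / x \<noteq> w"
        by (rule eventually_mono) (use w in auto)
    qed
    have "((\<lambda>z. H (1 / z)) \<longlongrightarrow> L) (at (1 / w))"
      using filterlim_compose[OF L f] by simp
    moreover have "eventually (\<lambda>z. H (1 / z) = H z) (at (1 / w))"
      using Hinv by (auto simp: eventually_at_filter intro!: always_eventually) (metis div_by_0)
    ultimately show ?thesis by (rule Lim_transform_eventually)
  qed
  have lim_mul: "(H \<longlongrightarrow> L) (at (p * w))" if L: "(H \<longlongrightarrow> L) (at w)" and w: "w \<noteq> 0" for w L
  proof -
    have f: "filterlim (\<lambda>z. z / p) (at w) (at (p * w))"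
    proof (rule filterlim_atI)
      show "((\<lambda>z. z / p) \<longlongrightarrow> w) (at (p * w))"
        using w p by (auto intro!: tendsto_eq_intros)
      show "\<forall>\<^sub>F x in at (p * w). x / p \<noteq> w"
        using w p by (auto simp: eventually_at_filter field_simps)
    qed
    have "((\<lambda>z. H (z / p)) \<longlongrightarrow> L) (at (p * w))"
      using filterlim_compose[OF L f] by simp
    moreover have "eventually (\<lambda>z. H (z / p) = H z) (at (p * w))"
    proof (rule always_eventually, rule allI)
      fix z show "H (z / p) = H z" using Hshift[of "z / p"] p by (cases "z = 0") auto
    qed
    ultimately show ?thesis by (rule Lim_transform_eventually)
  qed
  have lim_div: "(H \<longlongrightarrow> L) (at (w / p))" if L: "(H \<longlongrightarrow> L) (at w)" and w: "w \<noteq> 0" for w L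
  proof -
    have f: "filterlim (\<lambda>z. p * z) (at w) (at (w / p))"
    proof (rule filterlim_atI)
      show "((\<lambda>z. p * z) \<longlongrightarrow> w) (at (w / p))"
        using w p by (auto intro!: tendsto_eq_intros)
      show "\<forall>\<^sub>F x in at (w / p). p * x \<noteq> w"
        using w p by (auto simp: eventually_at_filter field_simps)
    qed
    have "((\<lambda>z. H (p * z)) \<longlongrightarrow> L) (at (w / p))"
      using filterlim_compose[OF L f] by simp
    moreover have "eventually (\<lambda>z. H (p * z) = H z) (at (w / p))"
    proof (rule always_eventually, rule allI)
      fix z show "H (p * z) = H z" using Hshift[of z] p by (cases "z = 0") auto
    qed
    ultimately show ?thesis by (rule Lim_transform_eventually)
  qed
  have lim_pow: "(H \<longlongrightarrow> L) (at (w * p ^ n)) \<and> (H \<longlongrightarrow> L) (at (w / p ^ n))"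
    if L: "(H \<longlongrightarrow> L) (at w)" and w: "w \<noteq> 0" for w L n
  proof (induction n)
    case 0 then show ?case using L by simp
  next
    case (Suc n)
    have "(H \<longlongrightarrow> L) (at (p * (w * p ^ n)))"
      using lim_mul[of L "w * p ^ n"] Suc w p by simp
    moreover have "(H \<longlongrightarrow> L) (at ((w / p ^ n) / p))"
      using lim_div[of L "w / p ^ n"] Suc w p by simp
    ultimately show ?case by (simp add: mult_ac)
  qed
  have limall: "\<exists>L. (H \<longlongrightarrow> L) (at z)" if z: "z \<noteq> 0" "Dn z = 0" for z
  proof -
    define L where "L = G' * (- u / E u)"
    have l1: "(H \<longlongrightarrow> L) (at (1 / u))" using lim_inv[OF limu] nz unfolding L_def by simp
    have A: "(H \<longlongrightarrow> L) (at (u * p ^ n))" "(H \<longlongrightarrow> L) (at (u / p ^ n))"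
            "(H \<longlongrightarrow> L) (at ((1/u) * p ^ n))" "(H \<longlongrightarrow> L) (at ((1/u) / p ^ n))" for n
      using lim_pow[OF limu[folded L_def] nz(2), of n] lim_pow[OF l1 _, of n] nz by auto
    from zeros[OF z] show ?thesis using A by blast
  qed
  define Ht where "Ht x = (if Dn x = 0 then Lim (at x) H else H x)" for x
  define S where "S = - {0} \<inter> Dn -` (- {0})"
  have Sopen: "open S" unfolding S_def
    by (rule continuous_open_preimage) (use holomorphic_on_imp_continuous_on[OF Dh] in auto)
  have yS: "y \<in> S" unfolding S_def using Dy nz by auto
  have HS: "H holomorphic_on S"
    unfolding H_def S_def
    by (intro holomorphic_intros holomorphic_on_subset[OF Gh] holomorphic_on_subset[OF Dh]) auto
  have Hth: "Ht holomorphic_on - {0}"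
    unfolding holomorphic_on_open[OF opn]
  proof
    fix z :: complex assume z: "z \<in> - {0}"
    show "\<exists>f'. (Ht has_field_derivative f') (at z)"
    proof (cases "Dn z = 0")
      case False
      then have zS: "z \<in> S" unfolding S_def using z by auto
      have "Ht holomorphic_on S"
        by (rule holomorphic_transform[OF HS]) (auto simp: Ht_def S_def)
      then show ?thesis using holomorphic_on_imp_differentiable_at[OF _ Sopen zS]
        by (auto simp: field_differentiable_def)
    next
      case True
      obtain r where r: "0 < r" "ball z r \<subseteq> - {0}" "\<And>w. w \<in> ball z r - {z} \<Longrightarrow> Dn w \<noteq> 0"
        using isolated_zeros[OF Dh opn conn z True _ Dy] nz by auto
      obtain L where L: "(H \<longlongrightarrow> L) (at z)" using limall z True by auto
      have "H holomorphic_on ball z r - {z}"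
        using r by (intro holomorphic_on_subset[OF HS]) (auto simp: S_def)
      then have h1: "(\<lambda>w. if w = z then L else H w) holomorphic_on ball z r"
        by (rule removable_singularity[OF _ open_ball L])
      have "Ht holomorphic_on ball z r"
      proof (rule holomorphic_transform[OF h1])
        fix w assume w: "w \<in> ball z r"
        show "(if w = z then L else H w) = Ht w"
        proof (cases "w = z")
          case True
          then show ?thesis using \<open>Dn z = 0\<close> tendsto_Lim[OF trivial_limit_at L]
            by (simp add: Ht_def)
        next
          case False
          then show ?thesis using r(3)[of w] w by (simp add: Ht_def)
        qed
      qed
      then show ?thesis using holomorphic_on_imp_differentiable_at[of Ht "ball z r" z] r(1)
        by (auto simp: field_differentiable_def)
    qed
  qed
  have Htper: "Ht (p * x) = Ht x" if x: "x \<noteq> 0" for x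
  proof (rule analytic_continuation_open[of S "- {0}" "\<lambda>x. Ht (p * x)" Ht])
    show "open S" by (rule Sopen)
    show "open (- {0::complex})" by (rule opn)
    show "S \<noteq> {}" using yS by auto
    show "connected (- {0::complex})" by (rule conn)
    show "S \<subseteq> - {0}" unfolding S_def by auto
    have "(Ht \<circ> (\<lambda>x. p * x)) holomorphic_on - {0}"
      by (rule holomorphic_on_compose_gen[OF _ Hth]) (use p in \<open>auto intro!: holomorphic_intros\<close>)
    then show "(\<lambda>x. Ht (p * x)) holomorphic_on - {0}" by (simp add: o_def)
    show "Ht holomorphic_on - {0}" by (rule Hth)
    show "x \<in> - {0}" using x by simp
    fix z assume z: "z \<in> S"
    then have z0: "z \<noteq> 0" and Dz: "Dn z \<noteq> 0" unfolding S_def by auto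
    then have "Dn (p * z) \<noteq> 0" using Dshift[OF z0] p by simp
    then show "Ht (p * z) = Ht z" using Dz Hshift[OF z0] by (simp add: Ht_def)
  qed
  have Hty: "Ht y = 0" unfolding Ht_def H_def using Dy Gy by simp
  have G0S: "G z = 0" if z: "z \<in> S" for z
  proof -
    from z have z0: "z \<noteq> 0" and Dz: "Dn z \<noteq> 0" unfolding S_def by auto
    have "Ht z = Ht y" by (rule elliptic_const[OF p Hth Htper z0 nz(1)])
    then have "H z = 0" using Hty Dz by (simp add: Ht_def)
    then show ?thesis using Dz by (simp add: H_def)
  qed
  have "G x = (\<lambda>_. 0) x"
    by (rule analytic_continuation_open[of S "- {0}" G "\<lambda>_. 0"])
       (use Sopen yS conn Gh x G0S in \<open>auto simp: S_def\<close>)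
  then show ?thesis unfolding G_def by simp
qed



lemma holo_nonzero_common:
  assumes S: "open S" "connected S" and f: "f holomorphic_on S" and g: "g holomorphic_on S"
    and a: "a \<in> S" "f a \<noteq> (0::complex)" and b: "b \<in> S" "g b \<noteq> 0"
  shows "\<exists>c\<in>S. f c \<noteq> 0 \<and> g c \<noteq> 0"
proof (rule ccontr)
  assume H: "\<not> (\<exists>c\<in>S. f c \<noteq> 0 \<and> g c \<noteq> 0)"
  define U where "U = S \<inter> f -` (- {0})"
  have "open U" unfolding U_def
    by (rule continuous_open_preimage) (use holomorphic_on_imp_continuous_on[OF f] S in auto)
  have "g b = (\<lambda>_. 0) b"
  proof (rule analytic_continuation_open[of U S g "\<lambda>_. 0"])
    show "U \<noteq> {}" using a unfolding U_def by auto
  qed (use \<open>open U\<close> S g b H in \<open>auto simp: U_def\<close>)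
  then show False using b by simp
qed

lemma etheta_minus1_nonzero:
  assumes p: "norm p < (1::real)"
  shows "etheta (-1) p \<noteq> 0"
proof -
  have "qinf z p \<noteq> 0" if "z = -1 \<or> z = - p" for z
  proof
    assume "qinf z p = 0"
    then obtain k where k: "z * p ^ k = 1" using qinf_eq_0_iff[OF p] by blast
    have "norm (z * p ^ k) = 1" using k by simp
    moreover have "norm (z * p ^ k) < 1 \<or> z * p ^ k = -1"
    proof (cases "z = -1")
      case True
      show ?thesis
      proof (cases k)
        case 0 then show ?thesis using True by simp
      next
        case (Suc m)
        have "norm p ^ Suc m < 1" using p by (cases "p = 0") (simp, rule power_Suc_less_one, auto)
        then show ?thesis using True Suc by (simp add: norm_mult norm_power)
      qed
    next
      case False
      then have z: "z = - p" using that by auto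
      have "norm p ^ Suc k < 1" using p by (cases "p = 0") (simp, rule power_Suc_less_one, auto)
      then show ?thesis using z by (simp add: norm_mult norm_power)
    qed
    ultimately show False using k by auto
  qed
  then show ?thesis unfolding etheta_def by simp
qed

lemma qinf_0_base: "qinf z 0 = 1 - z"
  using qinf_shift[of 0 z] qinf_0 by simp

lemma phi_0: "phi 0 x y = (1 - x * y) * (1 - x / y) / x"
  unfolding phi_def etheta_def qinf_0_base by simp

lemma addition_formula:
  assumes p: "norm p < (1::real)" and nz: "x \<noteq> 0" "y \<noteq> 0" "u \<noteq> 0" "v \<noteq> 0"
  shows "phi p x y * phi p u v - phi p x v * phi p u y = phi p x u * phi p y v"
proof (cases "p = 0")
  case True
  show ?thesis unfolding True phi_0 using nz by (simp add: field_simps)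
next
  case False
  note p' = p False
  have opn: "open (- {0::complex})" by auto
  have conn: "connected (- {0::complex})" by (intro connected_punctured_universe) simp
  define K where "K w = phi p x y * phi p w v - phi p x v * phi p w y - phi p x w * phi p y v" for w
  have phi2: "(\<lambda>w. phi p c w) holomorphic_on - {0}" if "c \<noteq> 0" for c
    unfolding phi_def using p that by (intro holomorphic_intros) auto
  have Kh: "K holomorphic_on - {0}"
    unfolding K_def using p nz by (intro holomorphic_intros phi2) auto
  define f1 where "f1 w = etheta (w * w) p" for w
  define g1 where "g1 w = etheta (y * w) p" for w
  define g2 where "g2 w = etheta (y / w) p" for w
  have f1h: "f1 holomorphic_on - {0}" unfolding f1_def using p by (intro holomorphic_intros) auto
  have g1h: "g1 holomorphic_on - {0}" unfolding g1_def using p nz by (intro holomorphic_intros) auto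
  have g2h: "g2 holomorphic_on - {0}" unfolding g2_def using p nz by (intro holomorphic_intros) auto
  have "f1 \<i> \<noteq> 0" unfolding f1_def using etheta_minus1_nonzero[OF p] by simp
  moreover have "g1 (- 1 / y) \<noteq> 0" unfolding g1_def using etheta_minus1_nonzero[OF p] nz by simp
  ultimately obtain c1 where c1: "c1 \<in> - {0}" "f1 c1 \<noteq> 0" "g1 c1 \<noteq> 0"
    using holo_nonzero_common[OF opn conn f1h g1h, of \<i> "- 1 / y"] nz by auto
  have fg1h: "(\<lambda>w. f1 w * g1 w) holomorphic_on - {0}" using f1h g1h by (intro holomorphic_intros)
  have "g2 (- y) \<noteq> 0" unfolding g2_def using etheta_minus1_nonzero[OF p] nz by simp
  then obtain c where c: "c \<in> - {0}" "f1 c * g1 c \<noteq> 0" "g2 c \<noteq> 0"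
    using holo_nonzero_common[OF opn conn fg1h g2h, of c1 "- y"] c1 nz by auto
  define T where "T = - {0} \<inter> (\<lambda>w. f1 w * g1 w * g2 w) -` (- {0})"
  have Topen: "open T" unfolding T_def
    by (rule continuous_open_preimage)
       (use holomorphic_on_imp_continuous_on[OF fg1h] holomorphic_on_imp_continuous_on[OF g2h]
         in \<open>auto intro!: continuous_intros\<close>)
  have cT: "c \<in> T" unfolding T_def using c by auto
  have KT: "K w = 0" if w: "w \<in> T" for w
  proof -
    from w have w0: "w \<noteq> 0" and a: "etheta (w * w) p \<noteq> 0" and b: "phi p y w \<noteq> 0"
      unfolding T_def f1_def g1_def g2_def phi_def using nz by auto
    show ?thesis using addition_generic[OF p' nz(2) w0 nz(4) a b nz(1)] unfolding K_def by simp
  qed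
  have "K u = (\<lambda>_. 0) u"
    by (rule analytic_continuation_open[of T "- {0}" K "\<lambda>_. 0"])
       (use Topen cT conn Kh nz KT in \<open>auto simp: T_def\<close>)
  then show ?thesis unfolding K_def by simp
qed



lemma lagrange_phi:
  assumes p: "norm p < (1::real)"
  shows "finite I \<Longrightarrow> card I = N + 2 \<Longrightarrow> (\<forall>k\<in>I. x k \<noteq> 0) \<Longrightarrow> (\<forall>j<N. c j \<noteq> 0) \<Longrightarrow>
    (\<forall>k\<in>I. \<forall>m\<in>I. k \<noteq> m \<longrightarrow> phi p (x k) (x m) \<noteq> 0) \<Longrightarrow>
    (\<Sum>k\<in>I. (\<Prod>j<N. phi p (x k) (c j)) / (\<Prod>m\<in>I - {k}. phi p (x k) (x m))) = 0"
proof (induction N arbitrary: I)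
  case 0
  then have "card I = 2" by simp
  then obtain \<alpha> \<beta> where ab: "I = {\<alpha>, \<beta>}" "\<alpha> \<noteq> \<beta>" unfolding card_2_iff by blast
  have "phi p (x \<beta>) (x \<alpha>) = - phi p (x \<alpha>) (x \<beta>)"
    by (rule phi_antisym[OF p]) (use 0(3) ab in auto)
  then show ?case using ab by (simp add: insert_Diff_if)
next
  case (Suc N)
  let ?phi = "phi p"
  from Suc.prems have fin: "finite I" and cI: "card I = Suc N + 2" by auto
  have xnz: "\<And>k. k \<in> I \<Longrightarrow> x k \<noteq> 0" using Suc.prems by auto
  have cnz: "\<And>j. j < Suc N \<Longrightarrow> c j \<noteq> 0" using Suc.prems by auto
  have dnz: "\<And>k m. k \<in> I \<Longrightarrow> m \<in> I \<Longrightarrow> k \<noteq> m \<Longrightarrow> ?phi (x k) (x m) \<noteq> 0" using Suc.prems by auto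
  have "I \<noteq> {}" using cI by auto
  then obtain \<alpha> where a: "\<alpha> \<in> I" by blast
  have cIa: "card (I - {\<alpha>}) = N + 2" using cI a fin by simp
  have "I - {\<alpha>} \<noteq> {}"
  proof
    assume "I - {\<alpha>} = {}"
    then have "card (I - {\<alpha>}) = 0" by (simp only: card.empty)
    with cIa show False by simp
  qed
  then obtain \<beta> where b: "\<beta> \<in> I - {\<alpha>}" by blast
  then have bI: "\<beta> \<in> I" and ab: "\<alpha> \<noteq> \<beta>" by auto
  define cc where "cc = c N"
  have ccnz: "cc \<noteq> 0" using cnz unfolding cc_def by simp
  define t where "t J k = (\<Prod>j<N. ?phi (x k) (c j)) / (\<Prod>m\<in>J - {k}. ?phi (x k) (x m))" for J k
  define A where "A = ?phi (x \<alpha>) cc / ?phi (x \<alpha>) (x \<beta>)"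
  define B where "B = ?phi cc (x \<beta>) / ?phi (x \<alpha>) (x \<beta>)"
  have IHb: "(\<Sum>k\<in>I - {\<beta>}. t (I - {\<beta>}) k) = 0"
    unfolding t_def using Suc.prems bI by (intro Suc.IH) auto
  have IHa: "(\<Sum>k\<in>I - {\<alpha>}. t (I - {\<alpha>}) k) = 0"
    unfolding t_def using Suc.prems a by (intro Suc.IH) auto
  have abnz: "?phi (x \<alpha>) (x \<beta>) \<noteq> 0" using dnz a bI ab by auto
  have key: "(\<Prod>j<Suc N. ?phi (x k) (c j)) / (\<Prod>m\<in>I - {k}. ?phi (x k) (x m)) =
      (if k = \<beta> then 0 else A * t (I - {\<beta>}) k) + (if k = \<alpha> then 0 else B * t (I - {\<alpha>}) k)"
    if k: "k \<in> I" for k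
  proof -
    define P where "P = (\<Prod>j<N. ?phi (x k) (c j))"
    have PS: "(\<Prod>j<Suc N. ?phi (x k) (c j)) = P * ?phi (x k) cc"
      unfolding P_def cc_def by simp
    define R where "R = (\<Prod>m\<in>I - {\<alpha>} - {\<beta>} - {k}. ?phi (x k) (x m))"
    have Rnz: "R \<noteq> 0" unfolding R_def using fin dnz k by (auto simp: prod_zero_iff)
    consider "k = \<alpha>" | "k = \<beta>" | "k \<noteq> \<alpha>" "k \<noteq> \<beta>" by blast
    then show ?thesis
    proof cases
      case 1
      have e1: "(\<Prod>m\<in>I - {k}. ?phi (x k) (x m)) = ?phi (x \<alpha>) (x \<beta>) * R"
      proof -
        have "(\<Prod>m\<in>I - {k}. ?phi (x k) (x m)) = ?phi (x k) (x \<beta>) * (\<Prod>m\<in>I - {k} - {\<beta>}. ?phi (x k) (x m))"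
          using fin bI ab 1 by (intro prod.remove) auto
        moreover have "I - {k} - {\<beta>} = I - {\<alpha>} - {\<beta>} - {k}" using 1 by auto
        ultimately show ?thesis unfolding R_def using 1 by simp
      qed
      have e2: "t (I - {\<beta>}) k = P / R"
      proof -
        have "I - {\<beta>} - {k} = I - {\<alpha>} - {\<beta>} - {k}" using 1 by auto
        then show ?thesis unfolding t_def P_def R_def by simp
      qed
      show ?thesis unfolding PS e1 e2 A_def using 1 ab abnz Rnz by (simp add: field_simps)
    next
      case 2
      have e1: "(\<Prod>m\<in>I - {k}. ?phi (x k) (x m)) = ?phi (x \<beta>) (x \<alpha>) * R"
      proof -
        have "(\<Prod>m\<in>I - {k}. ?phi (x k) (x m)) = ?phi (x k) (x \<alpha>) * (\<Prod>m\<in>I - {k} - {\<alpha>}. ?phi (x k) (x m))"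
          using fin a ab 2 by (intro prod.remove) auto
        moreover have "I - {k} - {\<alpha>} = I - {\<alpha>} - {\<beta>} - {k}" using 2 by auto
        ultimately show ?thesis unfolding R_def using 2 by simp
      qed
      have e2: "t (I - {\<alpha>}) k = P / R"
      proof -
        have "I - {\<alpha>} - {k} = I - {\<alpha>} - {\<beta>} - {k}" using 2 by auto
        then show ?thesis unfolding t_def P_def R_def by simp
      qed
      have s1: "?phi (x \<beta>) (x \<alpha>) = - ?phi (x \<alpha>) (x \<beta>)"
        by (rule phi_antisym[OF p xnz[OF a] xnz[OF bI]])
      have s2: "?phi (x \<beta>) cc = - ?phi cc (x \<beta>)"
        by (rule phi_antisym[OF p ccnz xnz[OF bI]])
      show ?thesis unfolding PS e1 e2 B_def using 2 ab abnz Rnz s1 s2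
        by (simp add: field_simps)
    next
      case 3
      have e1: "(\<Prod>m\<in>I - {k}. ?phi (x k) (x m)) = ?phi (x k) (x \<alpha>) * (?phi (x k) (x \<beta>) * R)"
      proof -
        have "(\<Prod>m\<in>I - {k}. ?phi (x k) (x m)) = ?phi (x k) (x \<alpha>) * (\<Prod>m\<in>I - {k} - {\<alpha>}. ?phi (x k) (x m))"
          using fin a 3 by (intro prod.remove) auto
        moreover have "(\<Prod>m\<in>I - {k} - {\<alpha>}. ?phi (x k) (x m)) = ?phi (x k) (x \<beta>) * (\<Prod>m\<in>I - {k} - {\<alpha>} - {\<beta>}. ?phi (x k) (x m))"
          using fin bI ab 3 by (intro prod.remove) auto
        moreover have "I - {k} - {\<alpha>} - {\<beta>} = I - {\<alpha>} - {\<beta>} - {k}" by auto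
        ultimately show ?thesis unfolding R_def by simp
      qed
      have e2: "t (I - {\<beta>}) k = P / (?phi (x k) (x \<alpha>) * R)"
      proof -
        have "(\<Prod>m\<in>I - {\<beta>} - {k}. ?phi (x k) (x m)) = ?phi (x k) (x \<alpha>) * (\<Prod>m\<in>I - {\<beta>} - {k} - {\<alpha>}. ?phi (x k) (x m))"
          using fin a ab 3 by (intro prod.remove) auto
        moreover have "I - {\<beta>} - {k} - {\<alpha>} = I - {\<alpha>} - {\<beta>} - {k}" by auto
        ultimately show ?thesis unfolding t_def P_def R_def by simp
      qed
      have e3: "t (I - {\<alpha>}) k = P / (?phi (x k) (x \<beta>) * R)"
      proof -
        have "(\<Prod>m\<in>I - {\<alpha>} - {k}. ?phi (x k) (x m)) = ?phi (x k) (x \<beta>) * (\<Prod>m\<in>I - {\<alpha>} - {k} - {\<beta>}. ?phi (x k) (x m))"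
          using fin bI ab 3 by (intro prod.remove) auto
        moreover have "I - {\<alpha>} - {k} - {\<beta>} = I - {\<alpha>} - {\<beta>} - {k}" by auto
        ultimately show ?thesis unfolding t_def P_def R_def by simp
      qed
      have ka: "?phi (x k) (x \<alpha>) \<noteq> 0" using dnz k a 3 by auto
      have kb: "?phi (x k) (x \<beta>) \<noteq> 0" using dnz k bI 3 by auto
      have add: "?phi (x k) cc * ?phi (x \<alpha>) (x \<beta>) - ?phi (x k) (x \<beta>) * ?phi (x \<alpha>) cc =
                 ?phi (x k) (x \<alpha>) * ?phi cc (x \<beta>)"
        by (rule addition_formula[OF p]) (use xnz k a bI ccnz in auto)
      then have add': "?phi (x k) cc = (?phi (x k) (x \<alpha>) * ?phi cc (x \<beta>) + ?phi (x k) (x \<beta>) * ?phi (x \<alpha>) cc) / ?phi (x \<alpha>) (x \<beta>)"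
        using abnz by (simp add: field_simps)
      show ?thesis unfolding PS e1 e2 e3 A_def B_def add' using 3 abnz Rnz ka kb
        by (simp add: field_simps)
    qed
  qed
  have "(\<Sum>k\<in>I. (\<Prod>j<Suc N. ?phi (x k) (c j)) / (\<Prod>m\<in>I - {k}. ?phi (x k) (x m))) =
        (\<Sum>k\<in>I. (if k = \<beta> then 0 else A * t (I - {\<beta>}) k)) + (\<Sum>k\<in>I. (if k = \<alpha> then 0 else B * t (I - {\<alpha>}) k))"
    using key by (simp add: sum.distrib)
  also have "(\<Sum>k\<in>I. (if k = \<beta> then 0 else A * t (I - {\<beta>}) k)) = A * (\<Sum>k\<in>I - {\<beta>}. t (I - {\<beta>}) k)"
  proof -
    have "(\<Sum>k\<in>I. (if k = \<beta> then 0 else A * t (I - {\<beta>}) k)) = (\<Sum>k\<in>I - {\<beta>}. (if k = \<beta> then 0 else A * t (I - {\<beta>}) k))"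
      using fin bI by (subst sum.remove[of _ \<beta>]) auto
    also have "\<dots> = (\<Sum>k\<in>I - {\<beta>}. A * t (I - {\<beta>}) k)" by (rule sum.cong) auto
    finally show ?thesis by (simp add: sum_distrib_left)
  qed
  also have "(\<Sum>k\<in>I. (if k = \<alpha> then 0 else B * t (I - {\<alpha>}) k)) = B * (\<Sum>k\<in>I - {\<alpha>}. t (I - {\<alpha>}) k)"
  proof -
    have "(\<Sum>k\<in>I. (if k = \<alpha> then 0 else B * t (I - {\<alpha>}) k)) = (\<Sum>k\<in>I - {\<alpha>}. (if k = \<alpha> then 0 else B * t (I - {\<alpha>}) k))"
      using fin a by (subst sum.remove[of _ \<alpha>]) auto
    also have "\<dots> = (\<Sum>k\<in>I - {\<alpha>}. B * t (I - {\<alpha>}) k)" by (rule sum.cong) auto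
    finally show ?thesis by (simp add: sum_distrib_left)
  qed
  finally show ?case using IHa IHb by simp
qed



lemma epoch_nat: "epoch a q p (int m) = (\<Prod>k<m. etheta (a * q ^ k) p)"
  unfolding epoch_def by simp

lemma exp_identity:
  fixes k d :: nat
  shows "k * (k + d) + (\<Sum>i<d. Suc i) = (Suc (k + d) choose 2) + (k choose 2)"
proof -
  have ch: "Suc m choose 2 = m + (m choose 2)" for m :: nat
    by (simp add: numeral_2_eq_2)
  have base: "k * k = k + 2 * (k choose 2)"
  proof (induction k)
    case (Suc k)
    then show ?case using ch[of k] by (simp add: algebra_simps)
  qed simp
  show ?thesis
  proof (induction d)
    case 0
    then show ?case using base ch[of k] by simp
  next
    case (Suc d)
    have "k * (k + Suc d) + (\<Sum>i<Suc d. Suc i) = (k * (k + d) + (\<Sum>i<d. Suc i)) + (k + Suc d)"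
      by (simp add: algebra_simps)
    also have "\<dots> = (Suc (k + d) choose 2) + (k choose 2) + (k + Suc d)" using Suc by simp
    also have "\<dots> = (Suc (k + Suc d) choose 2) + (k choose 2)"
      using ch[of "Suc (k + d)"] by simp
    finally show ?case .
  qed
qed

lemma P1:
  assumes p: "norm p < (1::real)" and nz: "a \<noteq> 0" "b \<noteq> 0" "q \<noteq> 0" "r \<noteq> 0" "s \<noteq> 0"
    and s: "s * s = a / b"
  shows "phi p (s * q ^ k) (a * r ^ j / s) =
    - (etheta (a * q ^ k * r ^ j) p * etheta (b / q ^ k * r ^ j) p) / (b * r ^ j * s)"
proof -
  have e1: "s * q ^ k * (a * r ^ j / s) = a * q ^ k * r ^ j" using nz by (simp add: field_simps)
  have e2: "s * q ^ k / (a * r ^ j / s) = 1 / (b / q ^ k * r ^ j)"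
  proof -
    have "s * q ^ k / (a * r ^ j / s) = (s * s) * q ^ k / (a * r ^ j)" using nz by (simp add: field_simps)
    also have "\<dots> = 1 / (b / q ^ k * r ^ j)" unfolding s using nz by (simp add: field_simps)
    finally show ?thesis .
  qed
  have e3: "etheta (1 / (b / q ^ k * r ^ j)) p = - etheta (b / q ^ k * r ^ j) p / (b / q ^ k * r ^ j)"
    by (rule etheta_inv[OF p]) (use nz in simp)
  show ?thesis unfolding phi_def e1 e2 e3 using nz by (simp add: field_simps)
qed

lemma P2m:
  assumes nz: "a \<noteq> 0" "b \<noteq> 0" "q \<noteq> 0" "s \<noteq> 0" and s: "s * s = a / b"
  shows "phi p (s * q ^ k) (s * q ^ m) = etheta (a * q ^ k / b * q ^ m) p * etheta (q ^ k / q ^ m) p / (s * q ^ k)"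
proof -
  have e1: "s * q ^ k * (s * q ^ m) = a * q ^ k / b * q ^ m"
  proof -
    have "s * q ^ k * (s * q ^ m) = (s * s) * q ^ k * q ^ m" by (simp add: algebra_simps)
    then show ?thesis unfolding s by simp
  qed
  have e2: "s * q ^ k / (s * q ^ m) = q ^ k / q ^ m" using nz by simp
  show ?thesis unfolding phi_def e1 e2 ..
qed

lemma P2a:
  assumes k: "k \<le> n"
  shows "(\<Prod>m\<in>{0..n} - {k}. etheta (a * q ^ k / b * q ^ m) p) * etheta (a * q ^ (2 * k) / b) p
         = epoch (a * q ^ k / b) q p (int n + 1)"
proof -
  have "epoch (a * q ^ k / b) q p (int n + 1) = (\<Prod>m\<in>{0..n}. etheta (a * q ^ k / b * q ^ m) p)"
    using epoch_nat[of "a * q ^ k / b" q p "Suc n"] by (simp add: lessThan_Suc_atMost atLeast0AtMost add.commute)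
  also have "\<dots> = etheta (a * q ^ k / b * q ^ k) p * (\<Prod>m\<in>{0..n} - {k}. etheta (a * q ^ k / b * q ^ m) p)"
    using k by (intro prod.remove) auto
  also have "a * q ^ k / b * q ^ k = a * q ^ (2 * k) / b" by (simp add: mult_2 power_add)
  finally show ?thesis by simp
qed

lemma P2b:
  assumes p: "norm p < (1::real)" and q: "q \<noteq> 0" and k: "k \<le> n"
  shows "(\<Prod>m\<in>{0..n} - {k}. etheta (q ^ k / q ^ m) p) =
    epoch q q p (int k) * ((-1) ^ (n - k) * epoch q q p (int (n - k)) / q ^ (\<Sum>i<n - k. Suc i))"
proof -
  have split: "{0..n} - {k} = {..<k} \<union> {Suc k..n}" using k by auto
  have disj: "{..<k} \<inter> {Suc k..n} = {}" by auto
  have "(\<Prod>m\<in>{0..n} - {k}. etheta (q ^ k / q ^ m) p) =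
        (\<Prod>m\<in>{..<k}. etheta (q ^ k / q ^ m) p) * (\<Prod>m\<in>{Suc k..n}. etheta (q ^ k / q ^ m) p)"
    unfolding split by (rule prod.union_disjoint) (use disj in auto)
  also have "(\<Prod>m\<in>{..<k}. etheta (q ^ k / q ^ m) p) = (\<Prod>i<k. etheta (q * q ^ i) p)"
  proof (rule prod.reindex_bij_witness[where i="\<lambda>i. k - Suc i" and j="\<lambda>m. k - Suc m"])
    fix m assume m: "m \<in> {..<k}"
    have "k = m + Suc (k - Suc m)" using m by simp
    then have "q ^ k = q ^ m * (q * q ^ (k - Suc m))" by (metis power_add power_Suc)
    then show "etheta (q * q ^ (k - Suc m)) p = etheta (q ^ k / q ^ m) p" using q by simp
  qed auto
  also have "\<dots> = epoch q q p (int k)" by (simp add: epoch_nat)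
  also have "(\<Prod>m\<in>{Suc k..n}. etheta (q ^ k / q ^ m) p) = (\<Prod>i<n - k. etheta (q ^ k / q ^ (Suc k + i)) p)"
    by (rule prod.reindex_bij_witness[where i="\<lambda>i. Suc k + i" and j="\<lambda>m. m - Suc k"]) auto
  also have "\<dots> = (\<Prod>i<n - k. - etheta (q * q ^ i) p / q ^ Suc i)"
  proof (rule prod.cong[OF refl])
    fix i
    have "q ^ k / q ^ (Suc k + i) = 1 / (q * q ^ i)" using q by (simp add: power_add field_simps)
    then show "etheta (q ^ k / q ^ (Suc k + i)) p = - etheta (q * q ^ i) p / q ^ Suc i"
      using etheta_inv[OF p, of "q * q ^ i"] q by simp
  qed
  also have "\<dots> = (\<Prod>i<n - k. (-1) * (etheta (q * q ^ i) p / q ^ Suc i))"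
    by (rule prod.cong) auto
  also have "\<dots> = (-1) ^ (n - k) * ((\<Prod>i<n - k. etheta (q * q ^ i) p) / (\<Prod>i<n - k. q ^ Suc i))"
    by (simp only: prod.distrib prod_dividef prod_constant card_lessThan)
  also have "\<dots> = (-1) ^ (n - k) * epoch q q p (int (n - k)) / q ^ (\<Sum>i<n - k. Suc i)"
    by (simp only: epoch_nat power_sum) simp
  finally show ?thesis by simp
qed



lemma alg:
  fixes Cc Nk Ak Tk Qk Q'k qE qkn qC qck sn \<sigma> \<tau> \<nu> :: complex
  assumes nz: "Ak \<noteq> 0" "Tk \<noteq> 0" "Qk \<noteq> 0" "Q'k \<noteq> 0" "qE \<noteq> 0" "qkn \<noteq> 0" "sn \<noteq> 0"
    and sg: "\<sigma> * \<tau> = \<nu>" "\<sigma> * \<sigma> = 1" "\<tau> * \<tau> = 1"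
    and ex: "qE * qkn = qC * qck"
  shows "Cc * Nk / ((Ak / Tk) * (Qk * (\<sigma> * Q'k / qE)) / (sn * qkn)) =
         (Cc * sn * qC * \<nu>) * (Nk * Tk / (Qk * Q'k * Ak) * \<tau> * qck)"
proof -
  have s0: "\<sigma> \<noteq> 0" using sg by auto
  have "Cc * Nk / ((Ak / Tk) * (Qk * (\<sigma> * Q'k / qE)) / (sn * qkn)) =
        Cc * Nk * Tk * (qE * qkn) * sn / (Ak * Qk * \<sigma> * Q'k)"
    using nz s0 by (simp add: field_simps)
  also have "\<dots> = Cc * Nk * Tk * (qC * qck) * sn * (\<sigma> * \<nu> * \<tau>) / (Ak * Qk * \<sigma> * Q'k)"
  proof -
    have "\<sigma> * \<nu> * \<tau> = 1" using sg by (metis mult.assoc mult.commute mult_1)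
    then show ?thesis unfolding ex by simp
  qed
  also have "\<dots> = (Cc * sn * qC * \<nu>) * (Nk * Tk / (Qk * Q'k * Ak) * \<tau> * qck)"
    using nz s0 sg by (simp add: field_simps)
  finally show ?thesis .
qed



lemma neg1_sq: "((-1::complex) ^ m) * ((-1) ^ m) = 1"
  by (induction m) auto

theorem mainTheorem9:
  fixes a b q r p :: complex and n :: nat
  assumes "norm p < 1"
    and "a \<noteq> 0" and "b \<noteq> 0" and "q \<noteq> 0" and "r \<noteq> 0"
    and "\<And>k. k \<le> n \<Longrightarrow> epoch q q p (int k) \<noteq> 0"
    and "\<And>k. k \<le> n \<Longrightarrow> epoch (a * q ^ k / b) q p (int n + 1) \<noteq> 0"
    and "n = 0 \<Longrightarrow> etheta (a / r) p \<noteq> 0 \<and> etheta (b / r) p \<noteq> 0"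
  shows "etheta (a / r) p * etheta (b / r) p *
    (\<Sum>k\<le>n. epoch (a * q ^ k) r p (int n - 1) * epoch (b / q ^ k) r p (int n - 1)
              * etheta (a * q ^ (2 * k) / b) p
            / (epoch q q p (int k) * epoch q q p (int (n - k)) * epoch (a * q ^ k / b) q p (int n + 1))
            * (-1) ^ k * q ^ (k choose 2))
    = (if n = 0 then 1 else 0)"
proof (cases "n = 0")
  case True
  have em1: "epoch c r p (-1) = 1 / etheta (c / r) p" for c
    unfolding epoch_def by (simp add: divide_inverse power_int_minus)
  have e1: "epoch (a / b) q p 1 = etheta (a / b) p"
    unfolding epoch_def by simp
  have nz: "etheta (a / b) p \<noteq> 0" using assms(7)[of 0] True e1 by simp
  have nz2: "etheta (a / r) p \<noteq> 0" "etheta (b / r) p \<noteq> 0" using assms(8) True by auto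
  have e0: "epoch q q p 0 = 1" by (simp add: epoch_def)
  have c0: "(0::nat) choose 2 = 0" by simp
  show ?thesis using True nz nz2 by (simp add: em1 e1 e0 c0)
next
  case False
  note p = assms(1)
  have nz: "a \<noteq> 0" "b \<noteq> 0" "q \<noteq> 0" "r \<noteq> 0" by (rule assms)+
  from False obtain N where nN: "n = Suc N" by (cases n) auto
  define s where "s = csqrt (a / b)"
  have ss: "s * s = a / b" unfolding s_def using power2_csqrt[of "a / b"] by (simp add: power2_eq_square)
  have s0: "s \<noteq> 0" using ss nz by auto
  define x where "x k = s * q ^ k" for k
  define c where "c j = a * r ^ j / s" for j
  have Fa: "etheta (a * q ^ k / b * q ^ m) p \<noteq> 0" if "k \<le> n" "m \<le> n" for k m
  proof -
    have "int n + 1 = int (Suc n)" by simp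
    then have "epoch (a * q ^ k / b) q p (int (Suc n)) \<noteq> 0" using assms(7)[OF that(1)] by metis
    then have P: "(\<Prod>i<Suc n. etheta (a * q ^ k / b * q ^ i) p) \<noteq> 0" by (simp only: epoch_nat not_False_eq_True)
    show ?thesis
    proof
      assume "etheta (a * q ^ k / b * q ^ m) p = 0"
      then have "(\<Prod>i<Suc n. etheta (a * q ^ k / b * q ^ i) p) = 0"
        using that(2) by (intro prod_zero) auto
      with P show False by contradiction
    qed
  qed
  have Fq: "etheta (q * q ^ i) p \<noteq> 0" if "i < n" for i
  proof -
    have "(\<Prod>i<n. etheta (q * q ^ i) p) \<noteq> 0" using assms(6)[of n] by (simp only: epoch_nat) simp
    then show ?thesis using that by (auto simp: prod_zero_iff)
  qed
  have Fqq: "etheta (q ^ k / q ^ m) p \<noteq> 0" if "k \<le> n" "m \<le> n" "k \<noteq> m" for k m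
  proof (cases "m < k")
    case True
    have "k = m + Suc (k - Suc m)" using True by simp
    then have "q ^ k = q ^ m * (q * q ^ (k - Suc m))" by (metis power_add power_Suc)
    then have "q ^ k / q ^ m = q * q ^ (k - Suc m)" using nz by simp
    then show ?thesis using Fq[of "k - Suc m"] True that by simp
  next
    case False
    then have km: "k < m" using that by simp
    have "m = k + Suc (m - Suc k)" using km by simp
    then have "q ^ m = q ^ k * (q * q ^ (m - Suc k))" by (metis power_add power_Suc)
    then have "q ^ k / q ^ m = 1 / (q * q ^ (m - Suc k))" using nz by simp
    moreover have "etheta (1 / (q * q ^ (m - Suc k))) p = - etheta (q * q ^ (m - Suc k)) p / (q * q ^ (m - Suc k))"
      by (rule etheta_inv[OF p]) (use nz in simp)
    ultimately show ?thesis using Fq[of "m - Suc k"] km that nz by simp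
  qed
  have dnz: "\<forall>k\<in>{0..n}. \<forall>m\<in>{0..n}. k \<noteq> m \<longrightarrow> phi p (x k) (x m) \<noteq> 0"
  proof (intro ballI impI)
    fix k m assume k: "k \<in> {0..n}" and m: "m \<in> {0..n}" and km: "k \<noteq> m"
    show "phi p (x k) (x m) \<noteq> 0"
      unfolding x_def P2m[OF nz(1-3) s0 ss] using Fa[of k m] Fqq[of k m] k m km s0 nz by simp
  qed
  have Lag: "(\<Sum>k\<in>{0..n}. (\<Prod>j<N. phi p (x k) (c j)) / (\<Prod>m\<in>{0..n} - {k}. phi p (x k) (x m))) = 0"
    by (rule lagrange_phi[OF p]) (use dnz s0 nz in \<open>auto simp: nN x_def c_def\<close>)
  define Cc where "Cc = (\<Prod>j<N. - 1 / (b * r ^ j * s))"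
  define C1 where "C1 = Cc * s ^ n * q ^ (Suc n choose 2) * (-1) ^ n"
  define termS where "termS k = epoch (a * q ^ k) r p (int n - 1) * epoch (b / q ^ k) r p (int n - 1)
              * etheta (a * q ^ (2 * k) / b) p
            / (epoch q q p (int k) * epoch q q p (int (n - k)) * epoch (a * q ^ k / b) q p (int n + 1))
            * (-1) ^ k * q ^ (k choose 2)" for k
  have rel: "(\<Prod>j<N. phi p (x k) (c j)) / (\<Prod>m\<in>{0..n} - {k}. phi p (x k) (x m)) = C1 * termS k"
    if k: "k \<le> n" for k
  proof -
    define Nk where "Nk = epoch (a * q ^ k) r p (int n - 1) * epoch (b / q ^ k) r p (int n - 1)"
    define Ak where "Ak = epoch (a * q ^ k / b) q p (int n + 1)"
    define Tk where "Tk = etheta (a * q ^ (2 * k) / b) p"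
    define Qk where "Qk = epoch q q p (int k)"
    define Q'k where "Q'k = epoch q q p (int (n - k))"
    define E where "E = (\<Sum>i<n - k. Suc i)"
    have num: "(\<Prod>j<N. phi p (x k) (c j)) = Cc * Nk"
    proof -
      have "int n - 1 = int N" using nN by simp
      then have e: "epoch (a * q ^ k) r p (int n - 1) = (\<Prod>j<N. etheta (a * q ^ k * r ^ j) p)"
                   "epoch (b / q ^ k) r p (int n - 1) = (\<Prod>j<N. etheta (b / q ^ k * r ^ j) p)"
        by (simp_all add: epoch_nat)
      have "(\<Prod>j<N. phi p (x k) (c j)) =
            (\<Prod>j<N. (- 1 / (b * r ^ j * s)) * (etheta (a * q ^ k * r ^ j) p * etheta (b / q ^ k * r ^ j) p))"
      proof (rule prod.cong[OF refl])
        fix j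
        show "phi p (x k) (c j) = (- 1 / (b * r ^ j * s)) * (etheta (a * q ^ k * r ^ j) p * etheta (b / q ^ k * r ^ j) p)"
          unfolding x_def c_def P1[OF p nz s0 ss] by (simp add: field_simps)
      qed
      then show ?thesis unfolding Nk_def Cc_def e by (simp only: prod.distrib)
    qed
    have Tk0: "Tk \<noteq> 0" using Fa[OF k k] unfolding Tk_def by (simp add: mult_2 power_add mult.assoc)
    have den: "(\<Prod>m\<in>{0..n} - {k}. phi p (x k) (x m)) =
               (Ak / Tk) * (Qk * ((-1) ^ (n - k) * Q'k / q ^ E)) / (s ^ n * (q ^ k) ^ n)"
    proof -
      have "(\<Prod>m\<in>{0..n} - {k}. phi p (x k) (x m)) =
            (\<Prod>m\<in>{0..n} - {k}. etheta (a * q ^ k / b * q ^ m) p * etheta (q ^ k / q ^ m) p / (s * q ^ k))"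
        unfolding x_def P2m[OF nz(1-3) s0 ss] ..
      also have "\<dots> = (\<Prod>m\<in>{0..n} - {k}. etheta (a * q ^ k / b * q ^ m) p) *
                      (\<Prod>m\<in>{0..n} - {k}. etheta (q ^ k / q ^ m) p) / (s * q ^ k) ^ n"
      proof -
        have "card ({0..n} - {k}) = n" using k by simp
        then show ?thesis by (simp add: prod.distrib prod_dividef)
      qed
      also have "(\<Prod>m\<in>{0..n} - {k}. etheta (a * q ^ k / b * q ^ m) p) = Ak / Tk"
        using P2a[OF k, of a q b p] Tk0 unfolding Ak_def Tk_def
        by (simp only: eq_divide_eq) simp
      also have "(\<Prod>m\<in>{0..n} - {k}. etheta (q ^ k / q ^ m) p) = Qk * ((-1) ^ (n - k) * Q'k / q ^ E)"
        unfolding Qk_def Q'k_def E_def by (rule P2b[OF p nz(3) k])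
      finally show ?thesis by (simp add: power_mult_distrib)
    qed
    have ex: "q ^ E * (q ^ k) ^ n = q ^ (Suc n choose 2) * q ^ (k choose 2)"
    proof -
      have "k * (k + (n - k)) + E = (Suc (k + (n - k)) choose 2) + (k choose 2)"
        unfolding E_def by (rule exp_identity)
      then have "E + k * n = (Suc n choose 2) + (k choose 2)" using k by simp
      then show ?thesis by (metis power_add power_mult)
    qed
    have sg: "(-1::complex) ^ (n - k) * (-1) ^ k = (-1) ^ n"
      using k by (simp flip: power_add)
    have "Cc * Nk / ((Ak / Tk) * (Qk * ((-1) ^ (n - k) * Q'k / q ^ E)) / (s ^ n * (q ^ k) ^ n)) =
          (Cc * s ^ n * q ^ (Suc n choose 2) * (-1) ^ n) * (Nk * Tk / (Qk * Q'k * Ak) * (-1) ^ k * q ^ (k choose 2))"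
    proof (rule alg)
      show "Ak \<noteq> 0" unfolding Ak_def using assms(7) k .
      show "Tk \<noteq> 0" by (rule Tk0)
      show "Qk \<noteq> 0" unfolding Qk_def using assms(6) k .
      show "Q'k \<noteq> 0" unfolding Q'k_def using assms(6)[of "n - k"] by simp
    qed (use nz s0 sg neg1_sq ex in auto)
    then show ?thesis unfolding num den C1_def termS_def Nk_def Ak_def Tk_def Qk_def Q'k_def by simp
  qed
  have "(\<Sum>k\<in>{0..n}. (\<Prod>j<N. phi p (x k) (c j)) / (\<Prod>m\<in>{0..n} - {k}. phi p (x k) (x m))) =
        C1 * (\<Sum>k\<le>n. termS k)"
    using rel by (simp add: sum_distrib_left atLeast0AtMost)
  moreover have "C1 \<noteq> 0"
    unfolding C1_def Cc_def using nz s0 by (auto simp: prod_zero_iff)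
  ultimately have "(\<Sum>k\<le>n. termS k) = 0" using Lag by simp
  then show ?thesis using False unfolding termS_def by simp
qed

end
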